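(* Let $D=E[\max(0,v-E[v])]>0$ and let $0<c'\le D$. Put $p_{c'}=c'/D$ and let $G_{c'}$ be the cdf of the distribution placing mass $p_{c'}$ at $E[v]$ and mass $1-p_{c'}$ at $v^{\max}$. Then $U_{\text{coop}}(G_{c'})=c'$ and $U_{\text{heur}}(G_{c'})=0$, so $U_{\text{coop}}(G_{c'})-U_{\text{heur}}(G_{c'})=c'$; hence Mechanism 1 with $G_{c'}$ is truthful for every cost $c<c'$. Moreover, the principal's expected loss (when the agent plays the cooperative strategy) $L_{\text{net}}(G_{c'})=E\big[\int_{[v^{\min},v]}(v-r)\,dG_{c'}(r)\big]$ equals $c'$. More generally, for every $G\in\mathcal{G}$, $L_{\text{net}}(G)=U_{\text{coop}}(G)=E[\widehat G(v)]$.
   Context: $v$ is a random variable supported in $[v^{\min},v^{\max}]$, $0\le v^{\min}<v^{\max}$. $\mathcal{G}$ is the set of cdfs of probability measures on $[v^{\min},v^{\max}]$, $\widehat G(x)=\int_{v^{\min}}^xG(r)\,dr$. Mechanism 1: the principal secretly draws a price $r$ (from $G$, in the limit where the $\epsilon$-uniform perturbation vanishes), the agent bids $b$, and if $b\ge r$ the agent gets the object (common value $v$) and pays $r$. $U_{\text{coop}}(G)=E\big[\sup_{b}\int_{[v^{\min},b]}(v-r)\,dG(r)\big]$, $U_{\text{heur}}(G)=\sup_{b}\int_{[v^{\min},b]}(E[v]-r)\,dG(r)$; Mechanism 1 is truthful for cost $c$ if $U_{\text{coop}}(G)-U_{\text{heur}}(G)>c$. The principal's loss when the object is sold at price $r$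 is $v-r$. *)

theory Defs
  imports "HOL-Probability.Probability"
begin

definition cdf_class :: "real \<Rightarrow> real \<Rightarrow> (real \<Rightarrow> real) set" where
  "cdf_class vmin vmax = {G. \<exists>\<mu>. prob_space \<mu> \<and> sets \<mu> = sets borel \<and>
      measure \<mu> {vmin..vmax} = 1 \<and> G = cdf \<mu>}"

definition payoff :: "(real \<Rightarrow> real) \<Rightarrow> real \<Rightarrow> real \<Rightarrow> real \<Rightarrow> real" where
  "payoff G vmin b w = (LINT r:{vmin..b}|interval_measure G. (w - r))"

definition U_coop :: "'a measure \<Rightarrow> ('a \<Rightarrow> real) \<Rightarrow> real \<Rightarrow> (real \<Rightarrow> real) \<Rightarrow> real" where
  "U_coop M v vmin G = integral\<^sup>L M (\<lambda>x. SUP b. payoff G vmin b (v x))"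

definition U_heur :: "'a measure \<Rightarrow> ('a \<Rightarrow> real) \<Rightarrow> real \<Rightarrow> (real \<Rightarrow> real) \<Rightarrow> real" where
  "U_heur M v vmin G = (SUP b. payoff G vmin b (integral\<^sup>L M v))"

definition truthful :: "'a measure \<Rightarrow> ('a \<Rightarrow> real) \<Rightarrow> real \<Rightarrow> (real \<Rightarrow> real) \<Rightarrow> real \<Rightarrow> bool" where
  "truthful M v vmin G c \<longleftrightarrow> U_coop M v vmin G - U_heur M v vmin G > c"

definition L_net :: "'a measure \<Rightarrow> ('a \<Rightarrow> real) \<Rightarrow> real \<Rightarrow> (real \<Rightarrow> real) \<Rightarrow> real" where
  "L_net M v vmin G = integral\<^sup>L M (\<lambda>x. payoff G vmin (v x) (v x))"

definition Ghat :: "real \<Rightarrow> (real \<Rightarrow> real) \<Rightarrow> real \<Rightarrow> real" where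
  "Ghat vmin G x = (LINT r:{vmin..x}|lborel. G r)"

end

theory Submission
  imports Defs
begin

lemma fub:
  fixes \<mu> :: "real measure"
  assumes rd: "real_distribution \<mu>" and ae: "AE r in \<mu>. vmin \<le> r"
  shows "(LINT r:{vmin..w}|\<mu>. (w - r)) = (LINT s:{vmin..w}|lborel. cdf \<mu> s)"
proof -
  interpret real_distribution \<mu> by fact
  interpret P: pair_sigma_finite \<mu> lborel
    by (intro_locales)
  define F where "F = (\<lambda>r s. (if vmin \<le> r \<and> r \<le> s \<and> s \<le> w then 1 else 0 :: ennreal))"
  have Fm: "case_prod F \<in> borel_measurable (\<mu> \<Otimes>\<^sub>M lborel)"
    unfolding F_def by measurable
  have i1: "(\<integral>\<^sup>+ s. F r s \<partial>lborel) = ennreal (indicator {vmin..w} r * (w - r))" for r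
  proof (cases "vmin \<le> r \<and> r \<le> w")
    case True
    have "(\<integral>\<^sup>+ s. F r s \<partial>lborel) = (\<integral>\<^sup>+ s. indicator {r..w} s \<partial>lborel)"
      using True by (intro nn_integral_cong) (auto simp: F_def indicator_def)
    also have "\<dots> = ennreal (w - r)" using True by simp
    finally show ?thesis using True by simp
  next
    case False
    then have "\<And>s. F r s = 0" by (auto simp: F_def)
    then show ?thesis using False by (simp add: indicator_def)
  qed
  have i2: "(\<integral>\<^sup>+ r. F r s \<partial>\<mu>) = ennreal (indicator {vmin..w} s * cdf \<mu> s)" for s
  proof (cases "vmin \<le> s \<and> s \<le> w")
    case True
    have "(\<integral>\<^sup>+ r. F r s \<partial>\<mu>) = (\<integral>\<^sup>+ r. indicator {vmin..s} r \<partial>\<mu>)"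
      using True by (intro nn_integral_cong) (auto simp: F_def indicator_def)
    also have "\<dots> = emeasure \<mu> {vmin..s}" by simp
    also have "\<dots> = emeasure \<mu> {..s}"
      by (rule emeasure_eq_AE) (use ae in auto)
    also have "\<dots> = ennreal (cdf \<mu> s)" by (simp add: emeasure_eq_measure cdf_def)
    finally show ?thesis using True by (simp add: indicator_def)
  next
    case False
    then have "\<And>r. F r s = 0" by (auto simp: F_def)
    then show ?thesis using False by (auto simp add: indicator_def)
  qed
  have eq: "(\<integral>\<^sup>+ r. ennreal (indicator {vmin..w} r * (w - r)) \<partial>\<mu>)
      = (\<integral>\<^sup>+ s. ennreal (indicator {vmin..w} s * cdf \<mu> s) \<partial>lborel)"
    using P.Fubini'[OF Fm] by (simp add: i1 i2)
  have cm: "cdf \<mu> \<in> borel_measurable borel"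
    by (rule borel_measurable_mono) (simp add: mono_def cdf_nondecreasing)
  have "(LINT r:{vmin..w}|\<mu>. (w - r)) = enn2real (\<integral>\<^sup>+ r. ennreal (indicator {vmin..w} r * (w - r)) \<partial>\<mu>)"
    unfolding set_lebesgue_integral_def
    by (rule enn2real_nn_integral_eq_integral[symmetric]) (auto simp: indicator_def)
  also have "\<dots> = enn2real (\<integral>\<^sup>+ s. ennreal (indicator {vmin..w} s * cdf \<mu> s) \<partial>lborel)"
    by (simp add: eq)
  also have "\<dots> = (LINT s:{vmin..w}|lborel. cdf \<mu> s)"
    unfolding set_lebesgue_integral_def
    using cm by (intro enn2real_nn_integral_eq_integral) (auto simp: cdf_nonneg)
  finally show ?thesis .
qed

lemma cdf_class_D:
  assumes "G \<in> cdf_class vmin vmax"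
  obtains \<mu> where "real_distribution \<mu>" "AE r in \<mu>. r \<in> {vmin..vmax}"
    "interval_measure G = \<mu>" "G = cdf \<mu>"
proof -
  obtain \<mu> where p: "prob_space \<mu>" "sets \<mu> = sets borel" "measure \<mu> {vmin..vmax} = 1" "G = cdf \<mu>"
    using assms unfolding cdf_class_def by blast
  interpret real_distribution \<mu> using p by (simp add: real_distribution_def real_distribution_axioms_def)
  have rd: "real_distribution \<mu>" by unfold_locales
  have ae: "AE r in \<mu>. r \<in> {vmin..vmax}" using AE_prob_1[OF p(3)] .
  have rd2: "real_distribution (interval_measure (cdf \<mu>))"
    by (rule real_distribution_interval_measure)
      (auto simp: cdf_nondecreasing cdf_is_right_cont cdf_lim_at_bot cdf_lim_at_top_prob)
  have "cdf (interval_measure (cdf \<mu>)) = cdf \<mu>"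
    by (rule cdf_interval_measure) (auto simp: cdf_nondecreasing cdf_is_right_cont cdf_lim_at_bot)
  then have "interval_measure (cdf \<mu>) = \<mu>" using cdf_unique rd rd2 by blast
  then show ?thesis using that rd ae p(4) by blast
qed

lemma pay_integrable:
  fixes \<mu> :: "real measure"
  assumes rd: "real_distribution \<mu>" and ae: "AE r in \<mu>. r \<in> {vmin..vmax}"
  shows "integrable \<mu> (\<lambda>r. indicator {vmin..b} r * (w - r))"
proof -
  interpret real_distribution \<mu> by fact
  show ?thesis
  proof (rule integrable_const_bound[where B="\<bar>w\<bar> + \<bar>vmin\<bar> + \<bar>vmax\<bar>"])
    show "AE x in \<mu>. norm (indicator {vmin..b} x * (w - x)) \<le> \<bar>w\<bar> + \<bar>vmin\<bar> + \<bar>vmax\<bar>"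
      using ae by eventually_elim (auto simp: indicator_def)
  qed simp
qed

lemma sup_pay:
  assumes "G \<in> cdf_class vmin vmax"
  shows "(SUP b. payoff G vmin b w) = payoff G vmin w w"
    and "payoff G vmin w w = Ghat vmin G w"
proof -
  obtain \<mu> where rd: "real_distribution \<mu>" and ae: "AE r in \<mu>. r \<in> {vmin..vmax}"
    and im: "interval_measure G = \<mu>" and Gc: "G = cdf \<mu>"
    using cdf_class_D[OF assms] by blast
  have le: "payoff G vmin b w \<le> payoff G vmin w w" for b
    unfolding payoff_def im set_lebesgue_integral_def
    using pay_integrable[OF rd ae, of b w] pay_integrable[OF rd ae, of w w]
    by (intro integral_mono) (auto simp: indicator_def)
  show "(SUP b. payoff G vmin b w) = payoff G vmin w w"
    by (rule cSup_eq_maximum) (auto intro: le)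
  have ae2: "AE r in \<mu>. vmin \<le> r" using ae by eventually_elim auto
  show "payoff G vmin w w = Ghat vmin G w"
    unfolding payoff_def Ghat_def im using fub[OF rd ae2] Gc by simp
qed

theorem mainTheorem5:
  fixes M :: "'a measure" and v :: "'a \<Rightarrow> real" and vmin vmax D c' :: real
    and Gc :: "real \<Rightarrow> real"
  assumes "prob_space M"
    and "v \<in> borel_measurable M"
    and "AE x in M. v x \<in> {vmin..vmax}"
    and "0 \<le> vmin" and "vmin < vmax"
    and D_def: "D = integral\<^sup>L M (\<lambda>x. max 0 (v x - integral\<^sup>L M v))"
    and "D > 0" and "0 < c'" and "c' \<le> D"
    and Gc_def: "Gc = (\<lambda>x. (if integral\<^sup>L M v \<le> x then c' / D else 0)
                        + (if vmax \<le> x then 1 - c' / D else 0))"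
  shows "Gc \<in> cdf_class vmin vmax
    \<and> U_coop M v vmin Gc = c'
    \<and> U_heur M v vmin Gc = 0
    \<and> U_coop M v vmin Gc - U_heur M v vmin Gc = c'
    \<and> (\<forall>c < c'. truthful M v vmin Gc c)
    \<and> L_net M v vmin Gc = c'
    \<and> (\<forall>G \<in> cdf_class vmin vmax.
         L_net M v vmin G = U_coop M v vmin G
         \<and> U_coop M v vmin G = integral\<^sup>L M (\<lambda>x. Ghat vmin G (v x)))"
proof -
  interpret prob_space M by fact
  note vm[measurable] = assms(2)
  note ae = assms(3)
  define m where "m = integral\<^sup>L M v"
  define p where "p = c' / D"
  have p0: "0 \<le> p" "p \<le> 1" "0 < p" using assms(7-9) by (auto simp: p_def field_simps)
  have vint: "integrable M v"
    by (rule integrable_const_bound[where B="\<bar>vmin\<bar> + \<bar>vmax\<bar>"]) (use ae in \<open>auto\<close>)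
  have mge: "vmin \<le> m"
  proof -
    have "integral\<^sup>L M (\<lambda>_. vmin) \<le> m" unfolding m_def
      by (rule integral_mono_AE) (use vint ae in auto)
    then show ?thesis by (simp add: prob_space)
  qed
  have mle: "m \<le> vmax"
  proof -
    have "m \<le> integral\<^sup>L M (\<lambda>_. vmax)" unfolding m_def
      by (rule integral_mono_AE) (use vint ae in auto)
    then show ?thesis by (simp add: prob_space)
  qed
  define f where "f = (\<lambda>b::bool. if b then m else vmax)"
  define \<mu> where "\<mu> = distr (measure_pmf (bernoulli_pmf p)) borel f"
  have fm[measurable]: "f \<in> measurable (measure_pmf (bernoulli_pmf p)) borel" by simp
  have pmu: "prob_space \<mu>" unfolding \<mu>_def by (rule measure_pmf.prob_space_distr) simp
  have rd: "real_distribution \<mu>"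
    using pmu by (simp add: real_distribution_def real_distribution_axioms_def \<mu>_def)
  have meas: "measure \<mu> S = indicator S m * p + indicator S vmax * (1 - p)" if "S \<in> sets borel" for S
  proof -
    have "measure \<mu> S = measure (measure_pmf (bernoulli_pmf p)) (f -` S)"
      unfolding \<mu>_def using that by (simp add: measure_distr)
    also have "\<dots> = sum (pmf (bernoulli_pmf p)) (f -` S)"
      by (rule measure_measure_pmf_finite) simp
    also have "f -` S = (if m \<in> S then {True} else {}) \<union> (if vmax \<in> S then {False} else {})"
      by (auto simp: f_def split: if_splits)
    also have "sum (pmf (bernoulli_pmf p)) \<dots> = indicator S m * p + indicator S vmax * (1 - p)"
      using p0 by (cases "m \<in> S"; cases "vmax \<in> S") auto
    finally show ?thesis .
  qed
  have cdfeq: "cdf \<mu> = Gc"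
    unfolding cdf_def Gc_def fun_eq_iff
  proof
    fix x
    show "measure \<mu> {..x} = (if integral\<^sup>L M v \<le> x then c' / D else 0) + (if vmax \<le> x then 1 - c' / D else 0)"
      using meas[of "{..x}"] by (simp add: indicator_def p_def m_def)
  qed
  have smu: "sets \<mu> = sets borel" by (simp add: \<mu>_def)
  have m1: "measure \<mu> {vmin..vmax} = 1"
    using meas[of "{vmin..vmax}"] mge mle assms(5) by (simp add: indicator_def)
  have inclass: "Gc \<in> cdf_class vmin vmax"
    unfolding cdf_class_def mem_Collect_eq
    by (intro exI[of _ \<mu>]) (simp add: pmu smu m1 cdfeq)
  obtain \<mu>' where rd': "real_distribution \<mu>'" and im: "interval_measure Gc = \<mu>'" and c': "Gc = cdf \<mu>'"
    by (rule cdf_class_D[OF inclass]) blast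
  have "cdf \<mu>' = cdf \<mu>" using c' cdfeq by (metis (no_types))
  then have imu: "interval_measure Gc = \<mu>" using cdf_unique[OF rd' rd] im by blast
  have payGc: "payoff Gc vmin w w = p * max 0 (w - m) + (1 - p) * max 0 (w - vmax)" for w
  proof -
    have "payoff Gc vmin w w = integral\<^sup>L \<mu> (\<lambda>r. indicator {vmin..w} r *\<^sub>R (w - r))"
      unfolding payoff_def imu set_lebesgue_integral_def ..
    also have "\<dots> = integral\<^sup>L (measure_pmf (bernoulli_pmf p)) (\<lambda>b. indicator {vmin..w} (f b) *\<^sub>R (w - f b))"
      unfolding \<mu>_def by (rule integral_distr) simp_all
    also have "\<dots> = p * max 0 (w - m) + (1 - p) * max 0 (w - vmax)"
      using p0 mge assms(5) by (auto simp: f_def indicator_def)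
    finally show ?thesis .
  qed
  have supeq: "\<And>G w. G \<in> cdf_class vmin vmax \<Longrightarrow> (SUP b. payoff G vmin b w) = payoff G vmin w w"
    using sup_pay(1) by blast
  have Ucoop: "U_coop M v vmin Gc = c'"
  proof -
    have "U_coop M v vmin Gc = integral\<^sup>L M (\<lambda>x. p * max 0 (v x - m) + (1 - p) * max 0 (v x - vmax))"
      unfolding U_coop_def supeq[OF inclass] payGc ..
    also have "\<dots> = integral\<^sup>L M (\<lambda>x. p * max 0 (v x - m))"
    proof (rule integral_cong_AE)
      show "AE x in M. p * max 0 (v x - m) + (1 - p) * max 0 (v x - vmax) = p * max 0 (v x - m)"
        using ae by eventually_elim auto
    qed simp_all
    also have "\<dots> = p * D" unfolding D_def m_def by simp
    also have "\<dots> = c'" using assms(7) by (simp add: p_def)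
    finally show ?thesis .
  qed
  have Uheur: "U_heur M v vmin Gc = 0"
    unfolding U_heur_def supeq[OF inclass] payGc m_def[symmetric] using mle by simp
  have Lnet: "L_net M v vmin G = U_coop M v vmin G" if "G \<in> cdf_class vmin vmax" for G
    unfolding L_net_def U_coop_def supeq[OF that] ..
  have gen: "U_coop M v vmin G = integral\<^sup>L M (\<lambda>x. Ghat vmin G (v x))" if "G \<in> cdf_class vmin vmax" for G
    unfolding U_coop_def supeq[OF that] sup_pay(2)[OF that] ..
  show ?thesis
    using inclass Ucoop Uheur Lnet[OF inclass] gen Lnet
    by (auto simp: truthful_def)
qed

end
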